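(* Let $\mathcal{A}$ and $\mathcal{B}$ be tile sets with $\mathcal{B}\subseteq\mathcal{A}$ (with consistent frequencies, the frequencies of tiles in $\mathcal{B}$ being those in $\mathcal{A}$). Then \[ \mathrm{KL}(\mathcal{A}\,\|\,\mathcal{B})=\sum_{i,j}\sum_{v\in\{0,1\}}p^*_{\mathcal{A}}((i,j)=v)\log\frac{p^*_{\mathcal{A}}((i,j)=v)}{p^*_{\mathcal{B}}((i,j)=v)}. \]
   Context: Fix $n,m\ge1$; $\mathcal{D}$ is the set of $n\times m$ binary matrices. A tile is $T=(t(T),a(T))$ with nonempty row set $t(T)\subseteq\{1..n\}$ and column set $a(T)\subseteq\{1..m\}$, $\mathrm{area}(T)=t(T)\times a(T)$; $\mathrm{fr}(T;D)=\frac1{|\mathrm{area}(T)|}\sum_{(i,j)\in\mathrm{area}(T)}D(i,j)$, $\mathrm{fr}(T;p)=\sum_Dp(D)\mathrm{fr}(T;D)$, $p((i,j)=v)=\sum_{D:D(i,j)=v}p(D)$. For a tile set $\mathcal{T}$ with consistent target frequencies $\alpha_T$, $p^*_{\mathcal{T}}$ is the entropy-maximising distribution among $\{p:\mathrm{fr}(T;p)=\alpha_T\ \forall T\in\mathcal{T}\}$. $\mathrm{KL}(p\|q)=\sum_Dp(D)\log\frac{p(D)}{q(D)}$ (natural log, $0\log0=0$), and $\mathrm{KL}(\mathcal{T}\|\mathcal{U})$ means $\mathrm{KL}(p^*_{\mathcal{T}}\|p^*_{\mathcal{U}})$. *)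

theory Defs
  imports Complex_Main
begin

text \<open>Binary n x m matrices: functions on index pairs, identically False outside
  the grid {1..n} x {1..m}; entry D(i,j) = 1 iff D (i,j) = True.\<close>
definition mats :: "nat \<Rightarrow> nat \<Rightarrow> (nat \<times> nat \<Rightarrow> bool) set" where
  "mats n m = {D. \<forall>i j. (i, j) \<notin> {1..n} \<times> {1..m} \<longrightarrow> D (i, j) = False}"

type_synonym tile = "nat set \<times> nat set"

definition is_tile :: "nat \<Rightarrow> nat \<Rightarrow> tile \<Rightarrow> bool" where
  "is_tile n m T \<longleftrightarrow> fst T \<noteq> {} \<and> fst T \<subseteq> {1..n} \<and> snd T \<noteq> {} \<and> snd T \<subseteq> {1..m}"

definition area :: "tile \<Rightarrow> (nat \<times> nat) set" where
  "area T = fst T \<times> snd T"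

definition fr_mat :: "tile \<Rightarrow> (nat \<times> nat \<Rightarrow> bool) \<Rightarrow> real" where
  "fr_mat T D = (\<Sum>c\<in>area T. of_bool (D c)) / real (card (area T))"

definition fr :: "nat \<Rightarrow> nat \<Rightarrow> tile \<Rightarrow> ((nat \<times> nat \<Rightarrow> bool) \<Rightarrow> real) \<Rightarrow> real" where
  "fr n m T p = (\<Sum>D\<in>mats n m. p D * fr_mat T D)"

definition is_dist :: "nat \<Rightarrow> nat \<Rightarrow> ((nat \<times> nat \<Rightarrow> bool) \<Rightarrow> real) \<Rightarrow> bool" where
  "is_dist n m p \<longleftrightarrow> (\<forall>D\<in>mats n m. 0 \<le> p D) \<and> (\<Sum>D\<in>mats n m. p D) = 1"

definition feasible :: "nat \<Rightarrow> nat \<Rightarrow> tile set \<Rightarrow> (tile \<Rightarrow> real)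
    \<Rightarrow> ((nat \<times> nat \<Rightarrow> bool) \<Rightarrow> real) set" where
  "feasible n m \<T> \<alpha> = {p. is_dist n m p \<and> (\<forall>T\<in>\<T>. fr n m T p = \<alpha> T)}"

text \<open>Shannon entropy (natural log; ln 0 = 0 in Isabelle, giving 0 log 0 = 0).\<close>
definition entropy :: "nat \<Rightarrow> nat \<Rightarrow> ((nat \<times> nat \<Rightarrow> bool) \<Rightarrow> real) \<Rightarrow> real" where
  "entropy n m p = - (\<Sum>D\<in>mats n m. p D * ln (p D))"

definition maxent :: "nat \<Rightarrow> nat \<Rightarrow> tile set \<Rightarrow> (tile \<Rightarrow> real)
    \<Rightarrow> ((nat \<times> nat \<Rightarrow> bool) \<Rightarrow> real)" where
  "maxent n m \<T> \<alpha> = (SOME p. p \<in> feasible n m \<T> \<alpha> \<and>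
      (\<forall>q\<in>feasible n m \<T> \<alpha>. entropy n m q \<le> entropy n m p))"

definition KL :: "nat \<Rightarrow> nat \<Rightarrow> ((nat \<times> nat \<Rightarrow> bool) \<Rightarrow> real)
    \<Rightarrow> ((nat \<times> nat \<Rightarrow> bool) \<Rightarrow> real) \<Rightarrow> real" where
  "KL n m p q = (\<Sum>D\<in>mats n m. p D * ln (p D / q D))"

definition cellp :: "nat \<Rightarrow> nat \<Rightarrow> ((nat \<times> nat \<Rightarrow> bool) \<Rightarrow> real) \<Rightarrow> nat \<times> nat \<Rightarrow> bool \<Rightarrow> real" where
  "cellp n m p c v = (\<Sum>D\<in>{D\<in>mats n m. D c = v}. p D)"

end

theory Submission
  imports Defs "HOL-Analysis.Analysis" "HOL-Real_Asymp.Real_Asymp"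
begin

lemma xlnx_tendsto: "((\<lambda>x::real. x * ln x) \<longlongrightarrow> 0) (at_right 0)"
  by real_asymp

lemma cont_xlnx: "continuous_on {0..} (\<lambda>x::real. x * ln x)"
proof (clarsimp simp: continuous_on_eq_continuous_within)
  fix x :: real assume "0 \<le> x"
  show "continuous (at x within {0..}) (\<lambda>x. x * ln x)"
  proof (cases "x = 0")
    case True
    have "at (0::real) within {0..} = at_right 0"
      by (simp add: at_within_Ici_at_right)
    then show ?thesis using True xlnx_tendsto
      by (simp add: continuous_within)
  next
    case False
    then have "isCont (\<lambda>x. x * ln x) x" by (intro continuous_intros) auto
    then show ?thesis using continuous_at_imp_continuous_within by blast
  qed
qed

lemma compact_box:
  fixes K :: "'a \<Rightarrow> real set"
  assumes "\<And>i. compact (K i)"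
  shows "compact (Pi\<^sub>E UNIV K)"
proof -
  have "compactin (product_topology (\<lambda>_. euclidean) UNIV) (Pi\<^sub>E UNIV K)"
    using assms by (simp add: compactin_PiE compactin_euclidean_iff)
  then show ?thesis by (simp add: euclidean_product_topology compactin_euclidean_iff)
qed

definition Mset :: "(nat \<times> nat) set \<Rightarrow> (nat \<times> nat \<Rightarrow> bool) set" where
  "Mset G = {D. \<forall>c. c \<notin> G \<longrightarrow> D c = False}"

lemma mats_eq: "mats n m = Mset ({1..n} \<times> {1..m})"
  unfolding mats_def Mset_def by auto

lemma Mset_empty: "Mset {} = {\<lambda>_. False}"
  unfolding Mset_def by auto

lemma Mset_insert:
  assumes "a \<notin> G"
  shows "Mset (insert a G) = (\<lambda>(D,v). D(a:=v)) ` (Mset G \<times> UNIV)"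
proof
  show "Mset (insert a G) \<subseteq> (\<lambda>(D,v). D(a:=v)) ` (Mset G \<times> UNIV)"
  proof
    fix D assume D: "D \<in> Mset (insert a G)"
    have "D = (\<lambda>(D,v). D(a:=v)) (D(a:=False), D a)" by auto
    moreover have "D(a:=False) \<in> Mset G" using D unfolding Mset_def by auto
    ultimately show "D \<in> (\<lambda>(D,v). D(a:=v)) ` (Mset G \<times> UNIV)" by blast
  qed
  show "(\<lambda>(D,v). D(a:=v)) ` (Mset G \<times> UNIV) \<subseteq> Mset (insert a G)"
    unfolding Mset_def by auto
qed

lemma inj_upd:
  assumes "a \<notin> G"
  shows "inj_on (\<lambda>(D,v). D(a:=v)) (Mset G \<times> UNIV)"
proof (rule inj_onI, clarsimp)
  fix D v D' v' assume D: "D \<in> Mset G" and D': "D' \<in> Mset G" and eq: "D(a := v) = D'(a := v')"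
  have "v = v'" using fun_cong[OF eq, of a] by simp
  moreover have "D = D'"
  proof
    fix c show "D c = D' c"
    proof (cases "c = a")
      case True then show ?thesis using D D' assms unfolding Mset_def mem_Collect_eq by metis
    next
      case False then show ?thesis using fun_cong[OF eq, of c] by simp
    qed
  qed
  ultimately show "D = D' \<and> v = v'" by simp
qed

lemma finite_Mset: "finite G \<Longrightarrow> finite (Mset G)"
proof (induction G rule: finite_induct)
  case empty then show ?case by (simp add: Mset_empty)
next
  case (insert a G) then show ?case by (simp add: Mset_insert)
qed

lemma sum_prod_Mset:
  fixes f :: "nat \<times> nat \<Rightarrow> bool \<Rightarrow> real"
  assumes "finite G"
  shows "(\<Sum>D\<in>Mset G. \<Prod>c\<in>G. f c (D c)) = (\<Prod>c\<in>G. f c True + f c False)"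
  using assms
proof (induction G rule: finite_induct)
  case empty then show ?case by (simp add: Mset_empty)
next
  case (insert a G)
  have "(\<Sum>D\<in>Mset (insert a G). \<Prod>c\<in>insert a G. f c (D c))
      = (\<Sum>x\<in>Mset G \<times> UNIV. \<Prod>c\<in>insert a G. f c (((\<lambda>(D,v). D(a:=v)) x) c))"
    unfolding Mset_insert[OF insert(2)] sum.reindex[OF inj_upd[OF insert(2)]] comp_def
    by (rule refl)
  also have "\<dots> = (\<Sum>x\<in>Mset G \<times> UNIV. f a (snd x) * (\<Prod>c\<in>G. f c (fst x c)))"
  proof (rule sum.cong[OF refl])
    fix x :: "(nat \<times> nat \<Rightarrow> bool) \<times> bool"
    obtain D v where x: "x = (D, v)" by (cases x)
    have "(\<Prod>c\<in>G. f c ((D(a := v)) c)) = (\<Prod>c\<in>G. f c (D c))"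
      using insert(2) by (intro prod.cong) auto
    then show "(\<Prod>c\<in>insert a G. f c (((\<lambda>(D,v). D(a:=v)) x) c)) = f a (snd x) * (\<Prod>c\<in>G. f c (fst x c))"
      using insert(1,2) x by simp
  qed
  also have "\<dots> = (\<Sum>D\<in>Mset G. \<Sum>v\<in>UNIV. f a v * (\<Prod>c\<in>G. f c (D c)))"
    by (subst sum.cartesian_product) (simp add: case_prod_beta)
  also have "\<dots> = (\<Sum>D\<in>Mset G. (f a True + f a False) * (\<Prod>c\<in>G. f c (D c)))"
    by (simp add: UNIV_bool algebra_simps)
  also have "\<dots> = (f a True + f a False) * (\<Sum>D\<in>Mset G. \<Prod>c\<in>G. f c (D c))"
    by (simp add: sum_distrib_left)
  also have "\<dots> = (\<Prod>c\<in>insert a G. f c True + f c False)"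
    using insert by simp
  finally show ?case .
qed

lemma marg_Mset:
  fixes f :: "nat \<times> nat \<Rightarrow> bool \<Rightarrow> real"
  assumes "finite G" "c0 \<in> G" "\<And>c. c \<in> G \<Longrightarrow> f c True + f c False = 1"
  shows "(\<Sum>D\<in>{D\<in>Mset G. D c0 = v}. \<Prod>c\<in>G. f c (D c)) = f c0 v"
proof -
  define f' where "f' c w = (if c = c0 \<and> w \<noteq> v then 0 else f c w)" for c w
  have "(\<Sum>D\<in>{D\<in>Mset G. D c0 = v}. \<Prod>c\<in>G. f c (D c))
      = (\<Sum>D\<in>Mset G. if D c0 = v then \<Prod>c\<in>G. f c (D c) else 0)"
    using finite_Mset[OF assms(1)] by (rule sum.inter_filter)
  also have "\<dots> = (\<Sum>D\<in>Mset G. \<Prod>c\<in>G. f' c (D c))"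
  proof (rule sum.cong[OF refl])
    fix D
    show "(if D c0 = v then \<Prod>c\<in>G. f c (D c) else 0) = (\<Prod>c\<in>G. f' c (D c))"
    proof (cases "D c0 = v")
      case True
      then show ?thesis unfolding f'_def by (auto intro: prod.cong)
    next
      case False
      then have "f' c0 (D c0) = 0" unfolding f'_def by simp
      then have "(\<Prod>c\<in>G. f' c (D c)) = 0" using assms(1,2) by (intro prod_zero) auto
      then show ?thesis using False by simp
    qed
  qed
  also have "\<dots> = (\<Prod>c\<in>G. f' c True + f' c False)"
    by (rule sum_prod_Mset[OF assms(1)])
  also have "\<dots> = (f' c0 True + f' c0 False) * (\<Prod>c\<in>G-{c0}. f' c True + f' c False)"
    using assms(1,2) by (simp add: prod.remove)
  also have "(\<Prod>c\<in>G-{c0}. f' c True + f' c False) = (\<Prod>c\<in>G-{c0}. 1)"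
    by (rule prod.cong) (auto simp: f'_def assms(3))
  also have "f' c0 True + f' c0 False = f c0 v"
    unfolding f'_def by (cases v) auto
  finally show ?thesis by simp
qed

lemma finite_mats: "finite (mats n m)"
  unfolding mats_eq by (rule finite_Mset) simp

lemma sum_split_bool:
  assumes "finite M"
  shows "(\<Sum>D\<in>M. h D) = (\<Sum>D\<in>{D\<in>M. P D}. h D) + (\<Sum>D\<in>{D\<in>M. \<not> P D}. h D)"
proof -
  have "M = {D\<in>M. P D} \<union> {D\<in>M. \<not> P D}" by auto
  then have "(\<Sum>D\<in>M. h D) = (\<Sum>D\<in>{D\<in>M. P D} \<union> {D\<in>M. \<not> P D}. h D)" by simp
  also have "\<dots> = (\<Sum>D\<in>{D\<in>M. P D}. h D) + (\<Sum>D\<in>{D\<in>M. \<not> P D}. h D)"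
    using assms by (intro sum.union_disjoint) auto
  finally show ?thesis .
qed

lemma cell_sum:
  "(\<Sum>D\<in>mats n m. q D * f (D c)) = (\<Sum>v\<in>UNIV. cellp n m q c v * f v)"
proof -
  have "(\<Sum>D\<in>mats n m. q D * f (D c)) =
     (\<Sum>D\<in>{D\<in>mats n m. D c}. q D * f (D c)) + (\<Sum>D\<in>{D\<in>mats n m. \<not> D c}. q D * f (D c))"
    by (rule sum_split_bool[OF finite_mats])
  also have "(\<Sum>D\<in>{D\<in>mats n m. D c}. q D * f (D c)) = cellp n m q c True * f True"
    unfolding cellp_def sum_distrib_right by (rule sum.cong) auto
  also have "(\<Sum>D\<in>{D\<in>mats n m. \<not> D c}. q D * f (D c)) = cellp n m q c False * f False"
    unfolding cellp_def sum_distrib_right by (rule sum.cong) auto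
  finally show ?thesis by (simp add: UNIV_bool)
qed

lemma group:
  assumes "finite G"
  shows "(\<Sum>D\<in>mats n m. q D * (\<Sum>c\<in>G. f c (D c))) = (\<Sum>c\<in>G. \<Sum>v\<in>UNIV. cellp n m q c v * f c v)"
proof -
  have "(\<Sum>D\<in>mats n m. q D * (\<Sum>c\<in>G. f c (D c))) = (\<Sum>D\<in>mats n m. \<Sum>c\<in>G. q D * f c (D c))"
    by (simp add: sum_distrib_left)
  also have "\<dots> = (\<Sum>c\<in>G. \<Sum>D\<in>mats n m. q D * f c (D c))"
    by (rule sum.swap)
  also have "\<dots> = (\<Sum>c\<in>G. \<Sum>v\<in>UNIV. cellp n m q c v * f c v)"
    by (simp add: cell_sum)
  finally show ?thesis .
qed

lemma fr_cell:
  "fr n m T q = (\<Sum>c\<in>area T. cellp n m q c True) / real (card (area T))"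
proof (cases "finite (area T)")
  case False
  then show ?thesis unfolding fr_def fr_mat_def by simp
next
  case True
  have "fr n m T q = (\<Sum>D\<in>mats n m. q D * (\<Sum>c\<in>area T. (\<lambda>c v. of_bool v) c (D c))) / real (card (area T))"
    unfolding fr_def fr_mat_def by (simp add: sum_divide_distrib[of "\<lambda>D. q D * _ D", symmetric])
  also have "\<dots> = (\<Sum>c\<in>area T. cellp n m q c True) / real (card (area T))"
    by (subst group[OF True]) (simp add: UNIV_bool)
  finally show ?thesis .
qed

lemma cellp_nonneg:
  assumes "is_dist n m q" shows "0 \<le> cellp n m q c v"
  using assms unfolding cellp_def is_dist_def by (auto intro: sum_nonneg)

lemma cellp_sum1:
  assumes "is_dist n m q" shows "cellp n m q c True + cellp n m q c False = 1"
proof -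
  have "cellp n m q c True + cellp n m q c False = (\<Sum>D\<in>mats n m. q D * (\<lambda>v. 1) (D c))"
    by (subst cell_sum[where f="\<lambda>v. 1" and c=c]) (simp add: UNIV_bool)
  then show ?thesis using assms unfolding is_dist_def by simp
qed

lemma le_cellp:
  assumes "is_dist n m q" "D \<in> mats n m" shows "q D \<le> cellp n m q c (D c)"
  unfolding cellp_def
  using assms finite_mats unfolding is_dist_def by (intro member_le_sum) auto

lemma gibbs:
  fixes a z :: real
  assumes "0 \<le> a" "0 < z"
  shows "a * ln z \<le> a * ln a - a + z"
proof (cases "a = 0")
  case True then show ?thesis using assms by simp
next
  case False
  then have a: "a > 0" using assms by simp
  have "ln (z / a) \<le> z / a - 1" using a assms by (intro ln_le_minus_one) simp
  then have "a * ln (z / a) \<le> a * (z / a - 1)" using a by (intro mult_left_mono) auto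
  then show ?thesis using a assms by (simp add: ln_div algebra_simps)
qed

lemma ln_strict: fixes x :: real assumes "0 < x" "x \<noteq> 1" shows "ln x < x - 1"
proof -
  have s: "sqrt x > 0" "sqrt x \<noteq> 1" using assms by auto
  have "ln x = 2 * ln (sqrt x)" using assms by (simp add: ln_sqrt)
  also have "\<dots> \<le> 2 * (sqrt x - 1)" using ln_le_minus_one[OF s(1)] by simp
  also have "\<dots> < x - 1"
  proof -
    have "(sqrt x - 1)^2 > 0" using s by simp
    then show ?thesis using assms by (simp add: power2_eq_square algebra_simps)
  qed
  finally show ?thesis .
qed

lemma gibbs_strict:
  fixes a z :: real
  assumes "0 < a" "0 < z" "z \<noteq> a"
  shows "a * ln z < a * ln a - a + z"
proof -
  have "ln (z / a) < z / a - 1" using assms by (intro ln_strict) auto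
  then have "a * ln (z / a) < a * (z / a - 1)" using assms by (intro mult_strict_left_mono) auto
  then show ?thesis using assms by (simp add: ln_div algebra_simps)
qed

lemma xlnx_conv:
  fixes u v t :: real
  assumes "0 \<le> u" "0 \<le> v" "0 \<le> t" "t \<le> 1"
  shows "((1-t) * u + t * v) * ln ((1-t) * u + t * v) \<le> (1-t) * (u * ln u) + t * (v * ln v)"
proof -
  define z where "z = (1-t) * u + t * v"
  have z0: "0 \<le> z" unfolding z_def using assms by simp
  show ?thesis
  proof (cases "z = 0")
    case True
    then have "(1 - t) * u = 0" "t * v = 0" unfolding z_def using assms
      by (smt (verit) mult_nonneg_nonneg)+
    then show ?thesis using True unfolding z_def by (auto simp: mult.assoc[symmetric])
  next
    case False
    then have zp: "0 < z" using z0 by simp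
    have "z * ln z = (1-t) * (u * ln z) + t * (v * ln z)" unfolding z_def by (simp add: algebra_simps)
    also have "\<dots> \<le> (1-t) * (u * ln u - u + z) + t * (v * ln v - v + z)"
      using assms zp by (intro add_mono mult_left_mono gibbs) auto
    also have "\<dots> = (1-t) * (u * ln u) + t * (v * ln v)" unfolding z_def by (simp add: algebra_simps)
    finally show ?thesis unfolding z_def .
  qed
qed

lemma feasible_convex:
  assumes "p \<in> feasible n m \<T> \<alpha>" "q \<in> feasible n m \<T> \<alpha>" "0 \<le> t" "t \<le> 1"
  shows "(\<lambda>D. (1-t) * p D + t * q D) \<in> feasible n m \<T> \<alpha>"
proof -
  have "is_dist n m (\<lambda>D. (1-t) * p D + t * q D)"
    using assms unfolding feasible_def is_dist_def
    by (auto simp: sum.distrib sum_distrib_left[symmetric])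
  moreover have "fr n m T (\<lambda>D. (1-t) * p D + t * q D) = (1-t) * fr n m T p + t * fr n m T q" for T
    unfolding fr_def by (simp add: distrib_right sum.distrib sum_distrib_left mult.assoc)
  ultimately show ?thesis using assms unfolding feasible_def by (auto simp: left_diff_distrib)
qed

lemma feasible_restrict:
  assumes "q \<in> feasible n m \<T> \<alpha>"
  shows "(\<lambda>D. if D \<in> mats n m then q D else 0) \<in> feasible n m \<T> \<alpha>"
    and "entropy n m (\<lambda>D. if D \<in> mats n m then q D else 0) = entropy n m q"
proof -
  let ?q = "\<lambda>D. if D \<in> mats n m then q D else 0"
  have s: "(\<Sum>D\<in>mats n m. ?q D * g D) = (\<Sum>D\<in>mats n m. q D * g D)" for g
    by (rule sum.cong) auto
  have "fr n m T ?q = fr n m T q" for T unfolding fr_def by (rule s)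
  moreover have "is_dist n m ?q" using assms unfolding feasible_def is_dist_def by auto
  ultimately show "?q \<in> feasible n m \<T> \<alpha>" using assms unfolding feasible_def by auto
  show "entropy n m ?q = entropy n m q" unfolding entropy_def by (simp cong: sum.cong)
qed

lemma maxent_spec:
  assumes ne: "feasible n m \<T> \<alpha> \<noteq> {}"
  shows "maxent n m \<T> \<alpha> \<in> feasible n m \<T> \<alpha> \<and>
    (\<forall>q\<in>feasible n m \<T> \<alpha>. entropy n m q \<le> entropy n m (maxent n m \<T> \<alpha>))"
proof -
  let ?F = "feasible n m \<T> \<alpha>"
  define K where "K D = (if D \<in> mats n m then {0..1} else {0::real})" for D
  define S where "S = Pi\<^sub>E UNIV K \<inter> ({p. sum p (mats n m) = 1} \<inter> (\<Inter>T\<in>\<T>. {p. fr n m T p = \<alpha> T}))"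
  have cK: "compact (K D)" for D unfolding K_def by auto
  have cfr: "continuous_on UNIV (\<lambda>p. fr n m T p)" for T
    unfolding fr_def by (intro continuous_intros continuous_on_product_coordinates)
  have csum: "continuous_on UNIV (\<lambda>p::(nat \<times> nat \<Rightarrow> bool) \<Rightarrow> real. sum p (mats n m))"
    using continuous_on_sum[of "mats n m" UNIV "\<lambda>D p. p D"] by simp
  have "closed ({p::(nat \<times> nat \<Rightarrow> bool) \<Rightarrow> real. sum p (mats n m) = 1} \<inter> (\<Inter>T\<in>\<T>. {p. fr n m T p = \<alpha> T}))"
    by (intro closed_Int closed_INT ballI closed_Collect_eq cfr csum continuous_on_const)
  then have cS: "compact S" unfolding S_def using compact_box[OF cK] by (intro compact_Int_closed)
  have SF: "S \<subseteq> ?F"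
  proof
    fix p assume p: "p \<in> S"
    then have "p \<in> Pi\<^sub>E UNIV K" unfolding S_def by (rule IntD1)
    then have pK: "p D \<in> K D" for D by (simp add: PiE_iff)
    have "\<forall>D\<in>mats n m. 0 \<le> p D"
    proof
      fix D assume "D \<in> mats n m"
      then have "p D \<in> {0..1}" using pK[of D] unfolding K_def by simp
      then show "0 \<le> p D" by simp
    qed
    moreover have "p \<in> {p. sum p (mats n m) = 1} \<inter> (\<Inter>T\<in>\<T>. {p. fr n m T p = \<alpha> T})"
      using p unfolding S_def by (rule IntD2)
    ultimately show "p \<in> ?F" unfolding feasible_def is_dist_def by auto
  qed
  have FS: "(\<lambda>D. if D \<in> mats n m then q D else 0) \<in> S" if "q \<in> ?F" for q
  proof -
    let ?q = "\<lambda>D. if D \<in> mats n m then q D else 0"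
    have qF: "?q \<in> ?F" by (rule feasible_restrict(1)[OF that])
    have "?q D \<in> K D" for D
    proof (cases "D \<in> mats n m")
      case True
      have "q D \<le> sum q (mats n m)" using that True finite_mats unfolding feasible_def is_dist_def
        by (intro member_le_sum) auto
      then show ?thesis using that True unfolding K_def feasible_def is_dist_def by auto
    next
      case False then show ?thesis unfolding K_def by simp
    qed
    then have "?q \<in> Pi\<^sub>E UNIV K" by (intro PiE_I) auto
    moreover have "?q \<in> {p. sum p (mats n m) = 1} \<inter> (\<Inter>T\<in>\<T>. {p. fr n m T p = \<alpha> T})"
      using qF unfolding feasible_def is_dist_def by auto
    ultimately show ?thesis unfolding S_def by (rule IntI)
  qed
  obtain q0 where "q0 \<in> ?F" using ne by auto
  then have Sne: "S \<noteq> {}" using FS[of q0] by auto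
  have cE: "continuous_on S (entropy n m)"
  proof -
    have cD: "continuous_on S (\<lambda>p. p D * ln (p D))" if D: "D \<in> mats n m" for D
    proof (rule continuous_on_compose2[OF cont_xlnx])
      show "continuous_on S (\<lambda>p. p D)"
        by (rule continuous_on_subset[OF continuous_on_product_coordinates]) simp
      show "(\<lambda>p. p D) ` S \<subseteq> {0..}"
      proof clarify
        fix p assume "p \<in> S"
        then have "p \<in> Pi\<^sub>E UNIV K" unfolding S_def by (rule IntD1)
        then have "p D \<in> K D" by (simp add: PiE_iff)
        then show "0 \<le> p D" using D unfolding K_def by simp
      qed
    qed
    then show ?thesis unfolding entropy_def
      by (intro continuous_on_minus continuous_on_sum) (rule cD)
  qed
  obtain p where pS: "p \<in> S" and pmax: "\<forall>y\<in>S. entropy n m y \<le> entropy n m p"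
    using continuous_attains_sup[OF cS Sne cE] by blast
  have "p \<in> ?F \<and> (\<forall>q\<in>?F. entropy n m q \<le> entropy n m p)"
  proof
    show "p \<in> ?F" using pS SF by auto
    show "\<forall>q\<in>?F. entropy n m q \<le> entropy n m p"
    proof
      fix q assume q: "q \<in> ?F"
      have "entropy n m q = entropy n m (\<lambda>D. if D \<in> mats n m then q D else 0)"
        using feasible_restrict(2)[OF q] by simp
      also have "\<dots> \<le> entropy n m p" by (rule bspec[OF pmax FS[OF q]])
      finally show "entropy n m q \<le> entropy n m p" .
    qed
  qed
  then show ?thesis unfolding maxent_def
    by (rule someI[where P="\<lambda>p. p \<in> ?F \<and> (\<forall>q\<in>?F. entropy n m q \<le> entropy n m p)"])
qed

lemma maxent_product:
  assumes pF: "p \<in> feasible n m \<T> \<alpha>"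
    and pmax: "\<forall>q\<in>feasible n m \<T> \<alpha>. entropy n m q \<le> entropy n m p"
    and D0: "D0 \<in> mats n m"
  shows "p D0 = (\<Prod>c\<in>{1..n} \<times> {1..m}. cellp n m p c (D0 c))"
proof -
  define G where "G = {1..n} \<times> {1..m}"
  define a where "a = cellp n m p"
  define r where "r D = (\<Prod>c\<in>G. a c (D c))" for D
  have finG: "finite G" unfolding G_def by simp
  have pd: "is_dist n m p" using pF unfolding feasible_def by simp
  have a0: "0 \<le> a c v" for c v unfolding a_def by (rule cellp_nonneg[OF pd])
  have a1: "a c True + a c False = 1" for c unfolding a_def by (rule cellp_sum1[OF pd])
  have ple: "p D \<le> a c (D c)" if "D \<in> mats n m" for D c unfolding a_def by (rule le_cellp[OF pd that])
  have p0: "0 \<le> p D" if "D \<in> mats n m" for D using pd that unfolding is_dist_def by auto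
  have mG: "mats n m = Mset G" unfolding G_def by (rule mats_eq)
  have rmarg: "cellp n m r c v = a c v" if "c \<in> G" for c v
    unfolding cellp_def r_def mG by (rule marg_Mset[OF finG that a1])
  have rmarg_all: "cellp n m r c True = cellp n m p c True" for c
  proof (cases "c \<in> G")
    case True then show ?thesis using rmarg a_def by simp
  next
    case False
    then have e: "{D\<in>mats n m. D c = True} = {}" unfolding mG Mset_def mem_Collect_eq by blast
    show ?thesis unfolding cellp_def e by simp
  qed
  have r0: "0 \<le> r D" for D unfolding r_def using a0 by (intro prod_nonneg) auto
  have rsum: "sum r (mats n m) = 1"
    unfolding r_def mG sum_prod_Mset[OF finG] a1 by simp
  have rd: "is_dist n m r" unfolding is_dist_def using r0 rsum by auto
  have rF: "r \<in> feasible n m \<T> \<alpha>"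
    using rd pF unfolding feasible_def by (simp add: fr_cell rmarg_all)
  then have Hle: "entropy n m r \<le> entropy n m p" using pmax by blast
  have rpos: "0 < r D" if "D \<in> mats n m" "0 < p D" for D
    unfolding r_def using ple[OF that(1)] that(2) by (intro prod_pos) (auto intro: less_le_trans)
  have E1: "(\<Sum>D\<in>mats n m. r D * ln (r D)) = (\<Sum>c\<in>G. \<Sum>v\<in>UNIV. a c v * ln (a c v))"
  proof -
    have "(\<Sum>D\<in>mats n m. r D * ln (r D)) = (\<Sum>D\<in>mats n m. r D * (\<Sum>c\<in>G. ln (a c (D c))))"
    proof (rule sum.cong[OF refl])
      fix D
      show "r D * ln (r D) = r D * (\<Sum>c\<in>G. ln (a c (D c)))"
      proof (cases "r D = 0")
        case False
        then have "a c (D c) \<noteq> 0" if "c \<in> G" for c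
          using that finG unfolding r_def by (auto simp: prod_zero_iff)
        then show ?thesis unfolding r_def using finG by (simp add: ln_prod)
      qed simp
    qed
    also have "\<dots> = (\<Sum>c\<in>G. \<Sum>v\<in>UNIV. cellp n m r c v * ln (a c v))"
      by (rule group[OF finG])
    also have "\<dots> = (\<Sum>c\<in>G. \<Sum>v\<in>UNIV. a c v * ln (a c v))"
      using rmarg by simp
    finally show ?thesis .
  qed
  have E2: "(\<Sum>D\<in>mats n m. p D * ln (r D)) = (\<Sum>c\<in>G. \<Sum>v\<in>UNIV. a c v * ln (a c v))"
  proof -
    have "(\<Sum>D\<in>mats n m. p D * ln (r D)) = (\<Sum>D\<in>mats n m. p D * (\<Sum>c\<in>G. ln (a c (D c))))"
    proof (rule sum.cong[OF refl])
      fix D assume D: "D \<in> mats n m"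
      show "p D * ln (r D) = p D * (\<Sum>c\<in>G. ln (a c (D c)))"
      proof (cases "p D = 0")
        case False
        then have "0 < p D" using p0[OF D] by simp
        then have "a c (D c) \<noteq> 0" for c using ple[OF D, of c] by simp
        then show ?thesis unfolding r_def using finG by (simp add: ln_prod)
      qed simp
    qed
    also have "\<dots> = (\<Sum>c\<in>G. \<Sum>v\<in>UNIV. a c v * ln (a c v))"
      unfolding a_def by (rule group[OF finG])
    finally show ?thesis .
  qed
  define g where "g D = p D * ln (p D) - p D + r D - p D * ln (r D)" for D
  have g0: "0 \<le> g D" if D: "D \<in> mats n m" for D
  proof (cases "p D = 0")
    case True then show ?thesis unfolding g_def using r0 by simp
  next
    case False
    then have "0 < p D" using p0[OF D] by simp
    then show ?thesis unfolding g_def using gibbs[OF p0[OF D] rpos[OF D]] by simp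
  qed
  have "sum g (mats n m) = (\<Sum>D\<in>mats n m. p D * ln (p D)) - sum p (mats n m) + sum r (mats n m)
        - (\<Sum>D\<in>mats n m. p D * ln (r D))"
    unfolding g_def by (simp add: sum.distrib sum_subtractf)
  also have "\<dots> = (\<Sum>D\<in>mats n m. p D * ln (p D)) - (\<Sum>D\<in>mats n m. r D * ln (r D))"
    using pd rsum E1 E2 unfolding is_dist_def by simp
  also have "\<dots> \<le> 0" using Hle unfolding entropy_def by simp
  finally have "sum g (mats n m) \<le> 0" .
  then have "sum g (mats n m) = 0" using g0 by (meson antisym sum_nonneg)
  then have "g D0 = 0" using g0 D0 finite_mats sum_nonneg_eq_0_iff by blast
  show ?thesis
  proof (cases "p D0 = 0")
    case True
    then have "r D0 = 0" using \<open>g D0 = 0\<close> unfolding g_def by simp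
    then show ?thesis using True unfolding r_def a_def G_def by simp
  next
    case False
    then have pp: "0 < p D0" using p0[OF D0] by simp
    have "r D0 = p D0"
    proof (rule ccontr)
      assume "r D0 \<noteq> p D0"
      then have "g D0 > 0" using gibbs_strict[OF pp rpos[OF D0 pp]] unfolding g_def by simp
      then show False using \<open>g D0 = 0\<close> by simp
    qed
    then show ?thesis unfolding r_def a_def G_def by simp
  qed
qed

lemma maxent_support:
  assumes pF: "p \<in> feasible n m \<T> \<alpha>"
    and pmax: "\<forall>q\<in>feasible n m \<T> \<alpha>. entropy n m q \<le> entropy n m p"
    and qF: "q \<in> feasible n m \<T> \<alpha>"
    and D0: "D0 \<in> mats n m" and qpos: "0 < q D0"
  shows "0 < p D0"
proof (rule ccontr)
  assume "\<not> 0 < p D0"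
  moreover have "0 \<le> p D0" using pF D0 unfolding feasible_def is_dist_def by auto
  ultimately have pz: "p D0 = 0" by simp
  define w where "w = q D0"
  define K where "K = entropy n m p - entropy n m q"
  have K0: "0 \<le> K" using pmax qF unfolding K_def by auto
  define t where "t = exp (- (K + 1) / w)"
  have w0: "0 < w" using qpos unfolding w_def .
  have t0: "0 < t" unfolding t_def by simp
  have "- (K + 1) / w < 0" using K0 w0 by (simp add: divide_neg_pos)
  then have t1: "t < 1" unfolding t_def by simp
  have lnt: "w * ln t = - (K + 1)" unfolding t_def using w0 by simp
  define z where "z D = (1 - t) * p D + t * q D" for D
  have zF: "z \<in> feasible n m \<T> \<alpha>" unfolding z_def using pF qF t0 t1 by (intro feasible_convex) auto
  have p0: "0 \<le> p D" if "D \<in> mats n m" for D using pF that unfolding feasible_def is_dist_def by auto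
  have q0: "0 \<le> q D" if "D \<in> mats n m" for D using qF that unfolding feasible_def is_dist_def by auto
  define B where "B D = (1 - t) * (p D * ln (p D)) + t * (q D * ln (q D)) + (if D = D0 then t * (w * ln t) else 0)" for D
  have zB: "z D * ln (z D) \<le> B D" if D: "D \<in> mats n m" for D
  proof (cases "D = D0")
    case True
    have "z D * ln (z D) = t * w * ln (t * w)" unfolding z_def True pz w_def by simp
    also have "\<dots> = t * (w * ln w) + t * (w * ln t)" using t0 w0 by (simp add: ln_mult algebra_simps)
    also have "\<dots> = B D" unfolding B_def True pz w_def by simp
    finally show ?thesis by simp
  next
    case False
    then show ?thesis unfolding B_def z_def using xlnx_conv[OF p0[OF D] q0[OF D]] t0 t1 by simp
  qed
  have "(\<Sum>D\<in>mats n m. z D * ln (z D)) \<le> sum B (mats n m)" using zB by (rule sum_mono)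
  also have "sum B (mats n m) = (1 - t) * (\<Sum>D\<in>mats n m. p D * ln (p D))
      + t * (\<Sum>D\<in>mats n m. q D * ln (q D)) + t * (w * ln t)"
    unfolding B_def using D0 finite_mats by (simp add: sum.distrib sum_distrib_left)
  finally have "entropy n m z \<ge> (1 - t) * entropy n m p + t * entropy n m q - t * (w * ln t)"
    unfolding entropy_def by simp
  also have "(1 - t) * entropy n m p + t * entropy n m q - t * (w * ln t) = entropy n m p + t"
    unfolding lnt K_def by (simp add: algebra_simps)
  finally have "entropy n m z > entropy n m p" using t0 by simp
  moreover have "entropy n m z \<le> entropy n m p" using pmax zF by blast
  ultimately show False by simp
qed

lemma feasible_mono: "\<B> \<subseteq> \<A> \<Longrightarrow> feasible n m \<A> \<alpha> \<subseteq> feasible n m \<B> \<alpha>"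
  unfolding feasible_def by auto

theorem theorem4:
  fixes n m :: nat and \<A> \<B> :: "tile set" and \<alpha> :: "tile \<Rightarrow> real"
  assumes "n \<ge> 1" and "m \<ge> 1"
    and "\<forall>T\<in>\<A>. is_tile n m T"
    and "\<B> \<subseteq> \<A>"
    and "feasible n m \<A> \<alpha> \<noteq> {}"
  shows "KL n m (maxent n m \<A> \<alpha>) (maxent n m \<B> \<alpha>) =
    (\<Sum>c\<in>{1..n} \<times> {1..m}. \<Sum>v\<in>(UNIV :: bool set).
       cellp n m (maxent n m \<A> \<alpha>) c v *
         ln (cellp n m (maxent n m \<A> \<alpha>) c v / cellp n m (maxent n m \<B> \<alpha>) c v))"
proof -
  define pA where "pA = maxent n m \<A> \<alpha>"
  define pB where "pB = maxent n m \<B> \<alpha>"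
  define G where "G = {1..n} \<times> {1..m}"
  define a where "a = cellp n m pA"
  define b where "b = cellp n m pB"
  have finG: "finite G" unfolding G_def by simp
  have sub: "feasible n m \<A> \<alpha> \<subseteq> feasible n m \<B> \<alpha>" using assms(4) by (rule feasible_mono)
  have A: "pA \<in> feasible n m \<A> \<alpha>" "\<forall>q\<in>feasible n m \<A> \<alpha>. entropy n m q \<le> entropy n m pA"
    using maxent_spec[OF assms(5)] unfolding pA_def by auto
  have neB: "feasible n m \<B> \<alpha> \<noteq> {}" using assms(5) sub by auto
  have B: "pB \<in> feasible n m \<B> \<alpha>" "\<forall>q\<in>feasible n m \<B> \<alpha>. entropy n m q \<le> entropy n m pB"
    using maxent_spec[OF neB] unfolding pB_def by auto
  have pAd: "is_dist n m pA" and pBd: "is_dist n m pB" using A(1) B(1) unfolding feasible_def by auto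
  have pA0: "0 \<le> pA D" if "D \<in> mats n m" for D using pAd that unfolding is_dist_def by auto
  have supp: "0 < pB D" if "D \<in> mats n m" "0 < pA D" for D
  proof -
    have "pA \<in> feasible n m \<B> \<alpha>" using A(1) sub by auto
    then show ?thesis using maxent_support[OF B(1) B(2), of pA D] that by auto
  qed
  have "KL n m pA pB = (\<Sum>D\<in>mats n m. pA D * (\<Sum>c\<in>G. ln (a c (D c) / b c (D c))))"
    unfolding KL_def
  proof (rule sum.cong[OF refl])
    fix D assume D: "D \<in> mats n m"
    show "pA D * ln (pA D / pB D) = pA D * (\<Sum>c\<in>G. ln (a c (D c) / b c (D c)))"
    proof (cases "pA D = 0")
      case False
      then have pa: "0 < pA D" using pA0[OF D] by simp
      have pb: "0 < pB D" by (rule supp[OF D pa])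
      have ac: "0 < a c (D c)" for c using le_cellp[OF pAd D, of c] pa unfolding a_def by simp
      have bc: "0 < b c (D c)" for c using le_cellp[OF pBd D, of c] pb unfolding b_def by simp
      have "pA D / pB D = (\<Prod>c\<in>G. a c (D c)) / (\<Prod>c\<in>G. b c (D c))"
        using maxent_product[OF A D] maxent_product[OF B D] unfolding a_def b_def G_def by simp
      also have "\<dots> = (\<Prod>c\<in>G. a c (D c) / b c (D c))" by (simp add: prod_dividef)
      moreover have "ln (\<Prod>c\<in>G. a c (D c) / b c (D c)) = (\<Sum>c\<in>G. ln (a c (D c) / b c (D c)))"
        using ac bc by (intro ln_prod[OF finG]) (metis divide_pos_pos less_irrefl)
      ultimately have "ln (pA D / pB D) = (\<Sum>c\<in>G. ln (a c (D c) / b c (D c)))" by simp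
      then show ?thesis by simp
    qed simp
  qed
  also have "\<dots> = (\<Sum>c\<in>G. \<Sum>v\<in>UNIV. cellp n m pA c v * ln (a c v / b c v))"
    by (rule group[OF finG])
  finally show ?thesis unfolding pA_def pB_def G_def a_def b_def .
qed

end
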